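(* Let $\delta,\alpha\geq0$, $\theta\in\left[\frac\alpha2,\alpha\right]$, $\varepsilon\in(0,1)$, and $$\lambda_\pm=\frac{|\xi|^{2\theta}}{2(1+|\xi|^{2\delta})}\left(-1\pm i\sqrt{4|\xi|^{2(\alpha-2\theta)}(1+|\xi|^{2\delta})-1}\right).$$ If $|\xi|<\varepsilon$ then: (i) $|\lambda_+-\lambda_-|\approx|\xi|^\alpha$; (ii) $|\lambda_\pm|^2\lesssim|\xi|^{2\alpha}$; (iii) $|e^{\lambda_\pm t}|\lesssim e^{-\frac14|\xi|^{2\theta}t}$ for $t\geq0$.
   Context: $f\lesssim g$ means $0\leq f\leq Cg$ with $C>0$ independent of $\xi$ and $t$; $g\approx f$ means $g\lesssim f$ and $f\lesssim g$. *)

theory Defs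
  imports "HOL-Analysis.Analysis"
begin

definition lam :: "real \<Rightarrow> real \<Rightarrow> real \<Rightarrow> real \<Rightarrow> 'a::real_normed_vector \<Rightarrow> complex" where
  "lam s \<delta> \<alpha> \<theta> \<xi> =
     complex_of_real (norm \<xi> powr (2*\<theta>) / (2 * (1 + norm \<xi> powr (2*\<delta>)))) *
     (-1 + complex_of_real s * \<i> *
        complex_of_real (sqrt (4 * norm \<xi> powr (2*(\<alpha> - 2*\<theta>)) * (1 + norm \<xi> powr (2*\<delta>)) - 1)))"

end

theory Submission
  imports Defs
begin

lemma lam_eq: "lam s \<delta> \<alpha> \<theta> \<xi> = Complex (- (norm \<xi> powr (2*\<theta>) / (2 * (1 + norm \<xi> powr (2*\<delta>)))))
   (s * (norm \<xi> powr (2*\<theta>) / (2 * (1 + norm \<xi> powr (2*\<delta>)))) * sqrt (4 * norm \<xi> powr (2*(\<alpha> - 2*\<theta>)) * (1 + norm \<xi> powr (2*\<delta>)) - 1))"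
  by (simp add: lam_def complex_eq_iff)

lemma key:
  fixes r \<delta> \<alpha> \<theta> :: real
  assumes "\<delta> \<ge> 0" "\<alpha> \<ge> 0" "\<alpha>/2 \<le> \<theta>" "\<theta> \<le> \<alpha>" "0 < r" "r < 1"
  defines "p \<equiv> r powr (2*\<theta>)" and "q \<equiv> r powr (2*\<delta>)" and "m \<equiv> r powr (2*(\<alpha>-2*\<theta>))"
    and "A \<equiv> r powr \<alpha>"
  shows "p > 0" "q > 0" "q \<le> 1" "m \<ge> 1" "p \<le> A" "p*p*m = A*A" "A > 0"
proof -
  show "p > 0" "q > 0" "A > 0" using assms by auto
  show "q \<le> 1" unfolding q_def using assms by (simp add: powr_le1)
  show "m \<ge> 1" unfolding m_def using assms
    using powr_mono'[of "2*(\<alpha>-2*\<theta>)" 0 r] by auto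
  show "p \<le> A" unfolding p_def A_def using assms by (intro powr_mono') auto
  show "p*p*m = A*A" unfolding p_def m_def A_def using assms
    by (simp add: powr_add[symmetric] algebra_simps)
qed

lemma alg:
  fixes p q m A :: real
  assumes "p > 0" "q > 0" "q \<le> 1" "m \<ge> 1" "p \<le> A" "p*p*m = A*A" "A > 0"
  defines "b \<equiv> 1 + q"
  defines "S \<equiv> sqrt (4*m*b - 1)"
  shows "p*S/b \<le> 2*A" "A \<le> 2*(p*S/b)" "S*S = 4*m*b - 1" "S \<ge> 0"
proof -
  have b1: "b \<ge> 1" "b \<le> 2" using assms(2,3) unfolding b_def by auto
  have "m*b \<ge> 1*1" using b1 assms(4) by (intro mult_mono) auto
  then have mb: "4*m*b - 1 \<ge> 0" by (simp add: mult.assoc)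
  show SS: "S*S = 4*m*b - 1" unfolding S_def real_sqrt_mult_self using mb by linarith
  show S0: "S \<ge> 0" unfolding S_def using mb by simp
  have "(p*S)^2 = p*p*(S*S)" by (simp add: power2_eq_square algebra_simps)
  also have "\<dots> = 4*b*(p*p*m) - p*p" unfolding SS by (simp add: algebra_simps)
  finally have e: "(p*S)^2 = 4*A*A*b - p*p" unfolding assms(6) by (simp add: algebra_simps)
  have "(p*S)^2 \<le> (2*A*b)^2"
  proof -
    have "A*A*b*1 \<le> A*A*b*b" using b1 assms(7) by (intro mult_left_mono) auto
    moreover have "p*p \<ge> 0" by simp
    ultimately have "4*A*A*b - p*p \<le> 4*(A*A*b*b)" by linarith
    then show ?thesis unfolding e by (simp add: power2_eq_square algebra_simps)
  qed
  moreover have "0 \<le> 2*A*b" using assms(7) b1 by simp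
  ultimately have "p*S \<le> 2*A*b" by (rule power2_le_imp_le)
  then show "p*S/b \<le> 2*A" using b1 by (simp add: divide_le_eq)
  have pp: "p*p \<le> A*A" using assms(1,5) by (intro mult_mono) auto
  have bb: "b*b \<le> 2*b" using b1 by (intro mult_right_mono) auto
  have "b*b+4 \<le> 16*b" using b1 bb by linarith
  then have AA: "A*A*(b*b+4) \<le> A*A*(16*b)" by (rule mult_left_mono) simp
  have "(A*b)^2 \<le> (2*(p*S))^2"
    using e pp AA by (simp add: power2_eq_square algebra_simps)
  moreover have "0 \<le> 2*(p*S)" using assms(1) S0 by simp
  ultimately have "A*b \<le> 2*(p*S)" by (rule power2_le_imp_le)
  then show "A \<le> 2*(p*S/b)" using b1 by (simp add: le_divide_eq)
qed

theorem lemma2p5: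
  fixes \<delta> \<alpha> \<theta> \<epsilon> :: real
  assumes "\<delta> \<ge> 0" and "\<alpha> \<ge> 0" and "\<alpha>/2 \<le> \<theta>" and "\<theta> \<le> \<alpha>"
    and "0 < \<epsilon>" and "\<epsilon> < 1"
  shows "\<exists>C>0. \<forall>\<xi>::'a::euclidean_space. 0 < norm \<xi> \<and> norm \<xi> < \<epsilon> \<longrightarrow>
     (norm (lam 1 \<delta> \<alpha> \<theta> \<xi> - lam (-1) \<delta> \<alpha> \<theta> \<xi>) \<le> C * norm \<xi> powr \<alpha> \<and>
      norm \<xi> powr \<alpha> \<le> C * norm (lam 1 \<delta> \<alpha> \<theta> \<xi> - lam (-1) \<delta> \<alpha> \<theta> \<xi>)) \<and>
     (\<forall>s\<in>{1, -1}. (norm (lam s \<delta> \<alpha> \<theta> \<xi>))^2 \<le> C * norm \<xi> powr (2*\<alpha>)) \<and>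
     (\<forall>s\<in>{1, -1}. \<forall>t::real. t \<ge> 0 \<longrightarrow>
        norm (exp (lam s \<delta> \<alpha> \<theta> \<xi> * complex_of_real t)) \<le> C * exp (- (1/4) * norm \<xi> powr (2*\<theta>) * t))"
proof (intro exI[of _ 2] conjI allI impI)
  show "(0::real) < 2" by simp
  fix \<xi> :: 'a
  assume r: "0 < norm \<xi> \<and> norm \<xi> < \<epsilon>"
  define p where "p = norm \<xi> powr (2*\<theta>)"
  define q where "q = norm \<xi> powr (2*\<delta>)"
  define m where "m = norm \<xi> powr (2*(\<alpha>-2*\<theta>))"
  define A where "A = norm \<xi> powr \<alpha>"
  define b where "b = 1 + q"
  define S where "S = sqrt (4*m*b - 1)"
  define c where "c = p / (2*b)"
  have r1: "norm \<xi> < 1" using r assms by linarith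
  note K = key[OF assms(1-4), of "norm \<xi>", OF conjunct1[OF r] r1, folded p_def q_def m_def A_def]
  note L = alg[OF K, folded b_def, folded S_def]
  have b1: "b \<ge> 1" "b \<le> 2" using K b_def by auto
  have c0: "c \<ge> 0" using K b1 unfolding c_def by auto
  have lamE: "lam s \<delta> \<alpha> \<theta> \<xi> = Complex (-c) (s*c*S)" for s
    unfolding lam_eq c_def S_def b_def m_def q_def p_def by simp
  have AA: "norm \<xi> powr (2*\<alpha>) = A*A" unfolding A_def by (simp add: powr_add[symmetric])
  have "norm (lam 1 \<delta> \<alpha> \<theta> \<xi> - lam (-1) \<delta> \<alpha> \<theta> \<xi>) = 2*c*S"
  proof -
    have "lam 1 \<delta> \<alpha> \<theta> \<xi> - lam (-1) \<delta> \<alpha> \<theta> \<xi> = complex_of_real (2*c*S) * \<i>"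
      unfolding lamE by (simp add: complex_eq_iff)
    then show ?thesis using c0 L(4) by (simp add: norm_mult)
  qed
  also have "\<dots> = p*S/b" unfolding c_def using b1 by simp
  finally have D: "norm (lam 1 \<delta> \<alpha> \<theta> \<xi> - lam (-1) \<delta> \<alpha> \<theta> \<xi>) = p*S/b" .
  show "norm (lam 1 \<delta> \<alpha> \<theta> \<xi> - lam (-1) \<delta> \<alpha> \<theta> \<xi>) \<le> 2 * norm \<xi> powr \<alpha>"
    using D L(1) A_def by simp
  show "norm \<xi> powr \<alpha> \<le> 2 * norm (lam 1 \<delta> \<alpha> \<theta> \<xi> - lam (-1) \<delta> \<alpha> \<theta> \<xi>)"
    using D L(2) A_def by simp
  show "\<forall>s\<in>{1, -1}. (norm (lam s \<delta> \<alpha> \<theta> \<xi>))^2 \<le> 2 * norm \<xi> powr (2*\<alpha>)"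
  proof
    fix s :: real assume s: "s \<in> {1, -1}"
    have ss: "s * s = 1" using s by auto
    have "(norm (lam s \<delta> \<alpha> \<theta> \<xi>))^2 = c*c*(1 + S*S)"
      unfolding lamE cmod_power2 using ss by (simp add: power2_eq_square algebra_simps)
    also have "\<dots> = c*c*(4*m*b)" using L(3) by simp
    also have "\<dots> = (p*p*m)/b" unfolding c_def using b1 by (simp add: field_simps)
    also have "\<dots> = A*A/b" using K by simp
    also have "\<dots> \<le> A*A" using b1 by (simp add: divide_le_eq mult_le_cancel_left1)
    also have "\<dots> \<le> 2*norm \<xi> powr (2*\<alpha>)" unfolding AA by simp
    finally show "(norm (lam s \<delta> \<alpha> \<theta> \<xi>))^2 \<le> 2 * norm \<xi> powr (2*\<alpha>)" .
  qed
  show "\<forall>s\<in>{1, -1}. \<forall>t::real. t \<ge> 0 \<longrightarrow>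
        norm (exp (lam s \<delta> \<alpha> \<theta> \<xi> * complex_of_real t)) \<le> 2 * exp (- (1/4) * norm \<xi> powr (2*\<theta>) * t)"
  proof (intro ballI allI impI)
    fix s t :: real assume t: "t \<ge> 0"
    have "norm (exp (lam s \<delta> \<alpha> \<theta> \<xi> * complex_of_real t)) = exp (-c*t)"
      unfolding norm_exp_eq_Re lamE by simp
    also have "\<dots> \<le> exp (- (1/4) * p * t)"
    proof -
      have "p/4 \<le> c" unfolding c_def using b1 K by (simp add: field_simps)
      then have "(p/4)*t \<le> c*t" using t by (rule mult_right_mono)
      then have "(1/4)*p*t \<le> c*t" by simp
      then show ?thesis by simp
    qed
    also have "\<dots> \<le> 2 * exp (- (1/4) * norm \<xi> powr (2*\<theta>) * t)" unfolding p_def by simp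
    finally show "norm (exp (lam s \<delta> \<alpha> \<theta> \<xi> * complex_of_real t)) \<le> 2 * exp (- (1/4) * norm \<xi> powr (2*\<theta>) * t)" .
  qed
qed

end
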